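(* Let $G$ be a connected graph and $(T,\mathcal V)$, $\mathcal V=(V_t : t \in T)$, a normal semi-partition tree of $G$. Then: (1) for incomparable $t,t' \in T$, the set $V(\lceil t\rceil \cap \lceil t'\rceil)$ separates $V_t$ from $V_{t'}$ in $G$; (2) for every connected subgraph $H$ of $G$ meeting $G(T)$ there is a unique $\le_T$-minimal element $t \in T$ with $V_t \cap V(H) \ne \emptyset$; (3) if $T' \subseteq T$ is down-closed, then every component of $G(T) - G(T')$ is $G(\lfloor t\rfloor)$ for some $t$ minimal in $T \setminus T'$; (4) if $T' \subseteq T$ is down-closed, then for every component $C$ of $G - G(T')$ that meets $G(T)$, the graph $C \cap G(T)$ is a component of $G(T) - G(T')$.
   Context: An order tree is a poset $(T,\le)$ with a unique minimal element (root) in which every down-closure $\lceil t\rceil=\{t'\le t\}$ is well-ordered; write $\mathring{\lceil t\rceil}=\lceil t\rceil\setminus\{t\}$, $\lfloor t\rfloor = \{t' \in T: t' \ge t\}$. A set $X\subseteq T$ is down-closed (a rooted subtree) if it equals its down-closure. For an order tree $T$, a $T$-graph is a graph on vertex set $T$ in which the endvertices of every edge are comparable and, for each $t$, the set of neighbours of $t$ below $t$ is cofinal in $\mathring{\lceil t\rceil}$. For a graph $G$ and family $\mathcal V=(V_t: t\in T)$ of nonempty vertex sets, $(T,\mathcal V)$ is a normal semi-partition tree of $G$ if: (a) the $V_t$ are pairwise disjoint; (b) each $G[V_t]$ is connected; (c) the graph obtained from $G[\bigcup\mathcal V]$ by contracting each $V_t$ to a single vertex $t$ (deleting loops and parallel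 edges) is a $T$-graph; (d) for every $\bigcup\mathcal V$-path $P$ in $G$ (a path with at least one edge, endvertices in $\bigcup \mathcal V$, inner vertices outside $\bigcup\mathcal V$, and no edge inside $G[\bigcup\mathcal V]$) with endvertices in $V_t$ and $V_{t'}$, the nodes $t,t'$ are comparable. For $S\subseteq T$ put $V(S)=\bigcup_{t\in S}V_t$ and $G(S)=G[V(S)]$. *)

theory Defs
  imports Main
begin

definition graph :: "'v set \<Rightarrow> ('v \<Rightarrow> 'v \<Rightarrow> bool) \<Rightarrow> bool" where
  "graph V adj \<longleftrightarrow> (\<forall>x y. adj x y \<longrightarrow> x \<in> V \<and> y \<in> V \<and> x \<noteq> y \<and> adj y x)"

definition subgraph :: "'v set \<Rightarrow> ('v \<Rightarrow> 'v \<Rightarrow> bool) \<Rightarrow> 'v set \<Rightarrow> ('v \<Rightarrow> 'v \<Rightarrow> bool) \<Rightarrow> bool" where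
  "subgraph W F V adj \<longleftrightarrow> graph W F \<and> W \<subseteq> V \<and> (\<forall>x y. F x y \<longrightarrow> adj x y)"

definition connected_graph :: "'v set \<Rightarrow> ('v \<Rightarrow> 'v \<Rightarrow> bool) \<Rightarrow> bool" where
  "connected_graph W F \<longleftrightarrow> W \<noteq> {} \<and>
     (\<forall>x\<in>W. \<forall>y\<in>W. (\<lambda>a b. F a b \<and> a \<in> W \<and> b \<in> W)\<^sup>*\<^sup>* x y)"

abbreviation connected_in :: "('v \<Rightarrow> 'v \<Rightarrow> bool) \<Rightarrow> 'v set \<Rightarrow> bool" where
  "connected_in adj X \<equiv> connected_graph X adj"

text \<open>C is (the vertex set of) a component of the induced subgraph G[X].
Components of induced subgraphs are induced subgraphs, so they are determined
by their vertex sets.\<close>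
definition component_of :: "('v \<Rightarrow> 'v \<Rightarrow> bool) \<Rightarrow> 'v set \<Rightarrow> 'v set \<Rightarrow> bool" where
  "component_of adj X C \<longleftrightarrow> C \<subseteq> X \<and> connected_in adj C \<and>
     (\<forall>D. C \<subseteq> D \<and> D \<subseteq> X \<and> connected_in adj D \<longrightarrow> D = C)"

definition gpath :: "('v \<Rightarrow> 'v \<Rightarrow> bool) \<Rightarrow> 'v list \<Rightarrow> bool" where
  "gpath adj p \<longleftrightarrow> p \<noteq> [] \<and> distinct p \<and>
     (\<forall>i. Suc i < length p \<longrightarrow> adj (p ! i) (p ! Suc i))"

definition separates :: "('v \<Rightarrow> 'v \<Rightarrow> bool) \<Rightarrow> 'v set \<Rightarrow> 'v set \<Rightarrow> 'v set \<Rightarrow> bool" where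
  "separates adj X A B \<longleftrightarrow>
     (\<forall>p. gpath adj p \<and> hd p \<in> A \<and> last p \<in> B \<longrightarrow> set p \<inter> X \<noteq> {})"

definition rel_on :: "'t set \<Rightarrow> ('t \<Rightarrow> 't \<Rightarrow> bool) \<Rightarrow> ('t \<times> 't) set" where
  "rel_on A le = {(x, y). x \<in> A \<and> y \<in> A \<and> le x y}"

text \<open>Down-closure \<lceil>t\<rceil>, strict down-closure, and up-closure \<lfloor>t\<rfloor>.\<close>
definition down :: "'t set \<Rightarrow> ('t \<Rightarrow> 't \<Rightarrow> bool) \<Rightarrow> 't \<Rightarrow> 't set" where
  "down T le t = {s \<in> T. le s t}"

definition sdown :: "'t set \<Rightarrow> ('t \<Rightarrow> 't \<Rightarrow> bool) \<Rightarrow> 't \<Rightarrow> 't set" where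
  "sdown T le t = down T le t - {t}"

definition up :: "'t set \<Rightarrow> ('t \<Rightarrow> 't \<Rightarrow> bool) \<Rightarrow> 't \<Rightarrow> 't set" where
  "up T le t = {s \<in> T. le t s}"

definition order_tree :: "'t set \<Rightarrow> ('t \<Rightarrow> 't \<Rightarrow> bool) \<Rightarrow> bool" where
  "order_tree T le \<longleftrightarrow>
     partial_order_on T (rel_on T le) \<and>
     (\<exists>!r. r \<in> T \<and> (\<forall>s\<in>T. le s r \<longrightarrow> s = r)) \<and>
     (\<forall>t\<in>T. well_order_on (down T le t) (rel_on (down T le t) le))"

definition down_closed :: "'t set \<Rightarrow> ('t \<Rightarrow> 't \<Rightarrow> bool) \<Rightarrow> 't set \<Rightarrow> bool" where
  "down_closed T le X \<longleftrightarrow> X \<subseteq> T \<and> (\<forall>t\<in>X. down T le t \<subseteq> X)"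

definition comparable :: "('t \<Rightarrow> 't \<Rightarrow> bool) \<Rightarrow> 't \<Rightarrow> 't \<Rightarrow> bool" where
  "comparable le s t \<longleftrightarrow> le s t \<or> le t s"

definition T_graph :: "'t set \<Rightarrow> ('t \<Rightarrow> 't \<Rightarrow> bool) \<Rightarrow> ('t \<Rightarrow> 't \<Rightarrow> bool) \<Rightarrow> bool" where
  "T_graph T le tadj \<longleftrightarrow> graph T tadj \<and>
     (\<forall>s t. tadj s t \<longrightarrow> comparable le s t) \<and>
     (\<forall>t\<in>T. \<forall>s\<in>sdown T le t. \<exists>u\<in>sdown T le t. tadj u t \<and> le s u)"

definition Vof :: "('t \<Rightarrow> 'v set) \<Rightarrow> 't set \<Rightarrow> 'v set" where
  "Vof Vt S = (\<Union>t\<in>S. Vt t)"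

definition contracted_adj :: "('v \<Rightarrow> 'v \<Rightarrow> bool) \<Rightarrow> 't set \<Rightarrow> ('t \<Rightarrow> 'v set) \<Rightarrow> 't \<Rightarrow> 't \<Rightarrow> bool" where
  "contracted_adj adj T Vt s t \<longleftrightarrow> s \<in> T \<and> t \<in> T \<and> s \<noteq> t \<and>
     (\<exists>x\<in>Vt s. \<exists>y\<in>Vt t. adj x y)"

definition U_path :: "('v \<Rightarrow> 'v \<Rightarrow> bool) \<Rightarrow> 'v set \<Rightarrow> 'v list \<Rightarrow> bool" where
  "U_path adj U p \<longleftrightarrow> gpath adj p \<and> length p \<ge> 2 \<and>
     hd p \<in> U \<and> last p \<in> U \<and>
     (\<forall>i. 0 < i \<and> i < length p - 1 \<longrightarrow> p ! i \<notin> U) \<and>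
     (\<forall>i. Suc i < length p \<longrightarrow> \<not> (p ! i \<in> U \<and> p ! Suc i \<in> U))"

definition normal_semi_partition_tree ::
  "'v set \<Rightarrow> ('v \<Rightarrow> 'v \<Rightarrow> bool) \<Rightarrow> 't set \<Rightarrow> ('t \<Rightarrow> 't \<Rightarrow> bool) \<Rightarrow> ('t \<Rightarrow> 'v set) \<Rightarrow> bool" where
  "normal_semi_partition_tree V adj T le Vt \<longleftrightarrow>
     order_tree T le \<and>
     (\<forall>t\<in>T. Vt t \<noteq> {} \<and> Vt t \<subseteq> V) \<and>
     (\<forall>s\<in>T. \<forall>t\<in>T. s \<noteq> t \<longrightarrow> Vt s \<inter> Vt t = {}) \<and>
     (\<forall>t\<in>T. connected_in adj (Vt t)) \<and>
     T_graph T le (contracted_adj adj T Vt) \<and>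
     (\<forall>p s t. U_path adj (Vof Vt T) p \<and> s \<in> T \<and> t \<in> T \<and>
        hd p \<in> Vt s \<and> last p \<in> Vt t \<longrightarrow> comparable le s t)"

end

theory Submission
  imports Defs
begin

lemma rt_mono: "R\<^sup>*\<^sup>* x y \<Longrightarrow> (\<And>a b. R a b \<Longrightarrow> S a b) \<Longrightarrow> S\<^sup>*\<^sup>* x y"
  by (induction rule: rtranclp_induct) (auto intro: rtranclp.rtrancl_into_rtrancl)

lemma rt_sym: "R\<^sup>*\<^sup>* x y \<Longrightarrow> (\<And>a b. R a b \<Longrightarrow> R b a) \<Longrightarrow> R\<^sup>*\<^sup>* y x"
  by (induction rule: rtranclp_induct) (auto intro: converse_rtranclp_into_rtranclp)

lemma gpath_single[simp]: "gpath adj [x]"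
  by (simp add: gpath_def)

lemma gpath_Cons2: "gpath adj (x # y # r) \<longleftrightarrow> adj x y \<and> x \<notin> set (y # r) \<and> gpath adj (y # r)"
proof
  assume H0: "gpath adj (x # y # r)"
  then have H: "\<And>i. Suc i < length (x#y#r) \<Longrightarrow> adj ((x#y#r)!i) ((x#y#r)!Suc i)"
    unfolding gpath_def by blast
  have "adj x y" using H[of 0] by simp
  moreover have "\<forall>i. Suc i < length (y#r) \<longrightarrow> adj ((y#r)!i) ((y#r)!Suc i)"
  proof (intro allI impI)
    fix i assume "Suc i < length (y#r)"
    then show "adj ((y#r)!i) ((y#r)!Suc i)" using H[of "Suc i"] by simp
  qed
  ultimately show "adj x y \<and> x \<notin> set (y # r) \<and> gpath adj (y # r)"
    using H0 unfolding gpath_def by auto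
next
  assume A: "adj x y \<and> x \<notin> set (y # r) \<and> gpath adj (y # r)"
  have "\<forall>i. Suc i < length (x#y#r) \<longrightarrow> adj ((x#y#r)!i) ((x#y#r)!Suc i)"
  proof (intro allI impI)
    fix i assume i: "Suc i < length (x#y#r)"
    show "adj ((x#y#r)!i) ((x#y#r)!Suc i)"
    proof (cases i)
      case 0 then show ?thesis using A by simp
    next
      case (Suc j) then show ?thesis using A i unfolding gpath_def by auto
    qed
  qed
  then show "gpath adj (x # y # r)" using A unfolding gpath_def by auto
qed

lemma gpath_ne: "gpath adj q \<Longrightarrow> q \<noteq> []" by (simp add: gpath_def)

lemma gpath_Cons: "gpath adj q \<Longrightarrow> adj a (hd q) \<Longrightarrow> a \<notin> set q \<Longrightarrow> gpath adj (a # q)"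
  by (cases q) (auto simp: gpath_Cons2 dest: gpath_ne)

lemma gpath_suffix: "gpath adj (q1 @ q2) \<Longrightarrow> q2 \<noteq> [] \<Longrightarrow> gpath adj q2"
proof (induction q1)
  case Nil then show ?case by simp
next
  case (Cons a q1)
  then obtain b r where "q1 @ q2 = b # r" by (cases "q1 @ q2") auto
  then show ?case using Cons by (simp add: gpath_Cons2)
qed

lemma gpath_snoc: "gpath adj q \<Longrightarrow> adj (last q) y \<Longrightarrow> y \<notin> set q \<Longrightarrow> gpath adj (q @ [y])"
proof (induction q)
  case Nil then show ?case by (simp add: gpath_def)
next
  case (Cons a q)
  show ?case
  proof (cases q)
    case Nil then show ?thesis using Cons by (simp add: gpath_Cons2)
  next
    case (Cons b r)
    then show ?thesis using Cons.prems Cons.IH by (auto simp add: gpath_Cons2)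
  qed
qed

lemma gpath_walk: "gpath adj p \<Longrightarrow> (\<lambda>a b. adj a b \<and> b \<in> set p)\<^sup>*\<^sup>* (hd p) (last p)"
proof (induction p)
  case Nil then show ?case by (simp add: gpath_def)
next
  case (Cons x r)
  show ?case
  proof (cases r)
    case Nil then show ?thesis by simp
  next
    case (Cons y r')
    then have "adj x y" "gpath adj r" using Cons.prems by (auto simp: gpath_Cons2)
    then have "(\<lambda>a b. adj a b \<and> b \<in> set r)\<^sup>*\<^sup>* y (last r)" using Cons.IH Cons by simp
    then have "(\<lambda>a b. adj a b \<and> b \<in> set (x#r))\<^sup>*\<^sup>* y (last r)" by (rule rt_mono) auto
    then show ?thesis using \<open>adj x y\<close> Cons
      by (auto intro: converse_rtranclp_into_rtranclp)
  qed
qed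

lemma path_extract:
  assumes "(\<lambda>u v. adj u v \<and> u \<in> P \<and> v \<in> P)\<^sup>*\<^sup>* x y" "x \<in> P"
  shows "\<exists>q. gpath adj q \<and> hd q = x \<and> last q = y \<and> set q \<subseteq> P"
  using assms
proof (induction rule: converse_rtranclp_induct)
  case base then show ?case by (intro exI[of _ "[y]"]) auto
next
  case (step x x')
  then obtain q where q: "gpath adj q" "hd q = x'" "last q = y" "set q \<subseteq> P" by auto
  show ?case
  proof (cases "x \<in> set q")
    case True
    then obtain q1 q2 where qq: "q = q1 @ x # q2" by (meson split_list)
    then have "gpath adj (x#q2)" using gpath_suffix[of adj q1 "x#q2"] q by auto
    then show ?thesis using qq q by (intro exI[of _ "x#q2"]) auto
  next
    case False
    have "q \<noteq> []" using q gpath_ne by auto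
    then show ?thesis using q step False gpath_Cons[of adj q x] by (intro exI[of _ "x#q"]) auto
  qed
qed

lemma Upath_build:
  assumes p: "gpath adj (a # q @ [y])" and "a \<in> U" "y \<in> U" "q \<noteq> []" "set q \<inter> U = {}"
  shows "U_path adj U (a # q @ [y])"
proof -
  have inner: "(a # q @ [y]) ! i \<in> set q" if "0 < i" "i < Suc (length q)" for i
  proof -
    obtain j where j: "i = Suc j" using \<open>0 < i\<close> by (cases i) auto
    then show ?thesis using that by (simp add: nth_append)
  qed
  have "\<not> ((a # q @ [y]) ! i \<in> U \<and> (a # q @ [y]) ! Suc i \<in> U)" if "Suc i < length (a # q @ [y])" for i
  proof (cases i)
    case 0
    then have "(a # q @ [y]) ! Suc i \<in> set q" using inner[of "Suc i"] \<open>q \<noteq> []\<close> by simp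
    then show ?thesis using assms by auto
  next
    case (Suc j)
    then have "(a # q @ [y]) ! i \<in> set q" using inner[of i] that by simp
    then show ?thesis using assms by auto
  qed
  moreover have "(a # q @ [y]) ! i \<notin> U" if "0 < i \<and> i < length (a # q @ [y]) - 1" for i
    using inner[of i] that assms by auto
  ultimately show ?thesis unfolding U_path_def using assms by auto
qed


lemma Vof_mem: "v \<in> Vof Vt S \<longleftrightarrow> (\<exists>s\<in>S. v \<in> Vt s)" by (simp add: Vof_def)

locale nspt =
  fixes V :: "'v set" and adj :: "'v \<Rightarrow> 'v \<Rightarrow> bool"
    and T :: "'t set" and le :: "'t \<Rightarrow> 't \<Rightarrow> bool" and Vt :: "'t \<Rightarrow> 'v set"
  assumes G: "graph V adj"
    and N: "normal_semi_partition_tree V adj T le Vt"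
begin

lemma OT: "order_tree T le" using N by (simp add: normal_semi_partition_tree_def)
lemma Vne: "t \<in> T \<Longrightarrow> Vt t \<noteq> {}" using N by (simp add: normal_semi_partition_tree_def)
lemma VsubV: "t \<in> T \<Longrightarrow> Vt t \<subseteq> V" using N by (simp add: normal_semi_partition_tree_def)
lemma disj: "s \<in> T \<Longrightarrow> t \<in> T \<Longrightarrow> x \<in> Vt s \<Longrightarrow> x \<in> Vt t \<Longrightarrow> s = t"
  using N unfolding normal_semi_partition_tree_def by blast
lemma Vconn: "t \<in> T \<Longrightarrow> connected_in adj (Vt t)" using N by (simp add: normal_semi_partition_tree_def)
lemma TG: "T_graph T le (contracted_adj adj T Vt)" using N by (simp add: normal_semi_partition_tree_def)
lemma Upath: "U_path adj (Vof Vt T) p \<Longrightarrow> s \<in> T \<Longrightarrow> t \<in> T \<Longrightarrow> hd p \<in> Vt s \<Longrightarrow> last p \<in> Vt t \<Longrightarrow> comparable le s t"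
  using N unfolding normal_semi_partition_tree_def by blast
lemma adjsym: "adj a b \<Longrightarrow> adj b a" using G unfolding graph_def by blast

lemma Trefl: "t \<in> T \<Longrightarrow> le t t"
  using OT unfolding order_tree_def partial_order_on_def preorder_on_def refl_on_def rel_on_def by auto
lemma Ttrans: "a \<in> T \<Longrightarrow> b \<in> T \<Longrightarrow> c \<in> T \<Longrightarrow> le a b \<Longrightarrow> le b c \<Longrightarrow> le a c"
  using OT unfolding order_tree_def partial_order_on_def preorder_on_def trans_def rel_on_def by blast
lemma Tanti: "a \<in> T \<Longrightarrow> b \<in> T \<Longrightarrow> le a b \<Longrightarrow> le b a \<Longrightarrow> a = b"
  using OT unfolding order_tree_def partial_order_on_def antisym_def rel_on_def by blast
lemma Two: "t \<in> T \<Longrightarrow> well_order_on (down T le t) (rel_on (down T le t) le)"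
  using OT unfolding order_tree_def by blast
lemma Tchain: "s \<in> T \<Longrightarrow> a \<in> T \<Longrightarrow> b \<in> T \<Longrightarrow> le a s \<Longrightarrow> le b s \<Longrightarrow> le a b \<or> le b a"
  using Two[of s] Trefl[of a]
  unfolding well_order_on_def linear_order_on_def total_on_def rel_on_def down_def by auto

lemma Twf: "wf {(a,b). a \<in> T \<and> b \<in> T \<and> le a b \<and> a \<noteq> b}"
  unfolding wf_eq_minimal
proof (intro allI impI)
  fix Q :: "'t set" and x assume xQ: "x \<in> Q"
  show "\<exists>z\<in>Q. \<forall>y. (y, z) \<in> {(a,b). a \<in> T \<and> b \<in> T \<and> le a b \<and> a \<noteq> b} \<longrightarrow> y \<notin> Q"
  proof (cases "x \<in> T")
    case False then show ?thesis using xQ by blast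
  next
    case True
    have "wf (rel_on (down T le x) le - Id)" using Two[OF True] unfolding well_order_on_def by blast
    then obtain z where z: "z \<in> Q \<inter> down T le x"
      and zm: "\<forall>y. (y, z) \<in> rel_on (down T le x) le - Id \<longrightarrow> y \<notin> Q \<inter> down T le x"
      using xQ True Trefl[OF True] unfolding wf_eq_minimal down_def
      by (metis (no_types, lifting) IntI mem_Collect_eq)
    have "\<forall>y. (y, z) \<in> {(a,b). a \<in> T \<and> b \<in> T \<and> le a b \<and> a \<noteq> b} \<longrightarrow> y \<notin> Q"
    proof (intro allI impI)
      fix y assume "(y, z) \<in> {(a,b). a \<in> T \<and> b \<in> T \<and> le a b \<and> a \<noteq> b}"
      then have y: "y \<in> T" "z \<in> T" "le y z" "y \<noteq> z" by auto
      have "le z x" using z unfolding down_def by auto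
      then have "le y x" using Ttrans y True by blast
      then have "y \<in> down T le x" using y unfolding down_def by auto
      then show "y \<notin> Q" using zm y z unfolding rel_on_def by auto
    qed
    then show ?thesis using z by blast
  qed
qed

lemma Tmin: assumes "Q \<subseteq> T" "q \<in> Q" shows "\<exists>m\<in>Q. \<forall>u\<in>Q. le u m \<longrightarrow> u = m"
proof -
  obtain z where z: "z \<in> Q" "\<forall>y. (y, z) \<in> {(a,b). a \<in> T \<and> b \<in> T \<and> le a b \<and> a \<noteq> b} \<longrightarrow> y \<notin> Q"
    using Twf assms unfolding wf_eq_minimal by meson
  then show ?thesis using assms by blast
qed

lemma up_step: "t0 \<in> T \<Longrightarrow> u \<in> T \<Longrightarrow> u' \<in> T \<Longrightarrow> le t0 u \<Longrightarrow> comparable le u u' \<Longrightarrow>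
   \<not> (le u' t0 \<and> u' \<noteq> t0) \<Longrightarrow> le t0 u'"
  unfolding comparable_def using Ttrans Tchain Trefl by metis

lemma adj_comp: "s \<in> T \<Longrightarrow> s' \<in> T \<Longrightarrow> x \<in> Vt s \<Longrightarrow> y \<in> Vt s' \<Longrightarrow> adj x y \<Longrightarrow> comparable le s s'"
proof (cases "s = s'")
  case True then show "s \<in> T \<Longrightarrow> ?thesis" using Trefl unfolding comparable_def by auto
next
  case False
  assume "s \<in> T" "s' \<in> T" "x \<in> Vt s" "y \<in> Vt s'" "adj x y"
  then have "contracted_adj adj T Vt s s'" using False unfolding contracted_adj_def by blast
  then show ?thesis using TG unfolding T_graph_def by blast
qed

definition "UU = Vof Vt T"
definition "Aset t0 = Vof Vt (up T le t0)"
definition "Bset t0 = {v. v \<notin> UU \<and> (\<exists>a\<in>Aset t0. \<exists>w. adj a w \<and> w \<notin> UU \<and>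
    (\<lambda>x y. adj x y \<and> x \<in> -UU \<and> y \<in> -UU)\<^sup>*\<^sup>* w v)}"

lemma closure_step:
  assumes t0: "t0 \<in> T" and Zb: "\<forall>u\<in>T. le u t0 \<and> u \<noteq> t0 \<longrightarrow> Vt u \<subseteq> Z"
    and x: "x \<in> Aset t0 \<union> Bset t0" and xy: "adj x y" and yZ: "y \<notin> Z"
  shows "y \<in> Aset t0 \<union> Bset t0"
proof (cases "y \<in> UU")
  case False
  show ?thesis
  proof (cases "x \<in> Aset t0")
    case True then show ?thesis using False xy unfolding Bset_def by blast
  next
    case False2: False
    with x obtain a w where "a \<in> Aset t0" "adj a w" "w \<notin> UU"
      "(\<lambda>x y. adj x y \<and> x \<in> -UU \<and> y \<in> -UU)\<^sup>*\<^sup>* w x" "x \<notin> UU" unfolding Bset_def by blast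
    moreover then have "(\<lambda>x y. adj x y \<and> x \<in> -UU \<and> y \<in> -UU)\<^sup>*\<^sup>* w y"
      using xy False by (auto intro: rtranclp.rtrancl_into_rtrancl)
    ultimately show ?thesis using False unfolding Bset_def by blast
  qed
next
  case True
  then obtain s' where s': "s' \<in> T" "y \<in> Vt s'" unfolding UU_def Vof_def by auto
  have "\<exists>s. s \<in> T \<and> le t0 s \<and> comparable le s s'"
  proof (cases "x \<in> Aset t0")
    case True
    then obtain s where "s \<in> T" "le t0 s" "x \<in> Vt s" unfolding Aset_def Vof_def up_def by auto
    then show ?thesis using adj_comp[OF _ s'(1) _ s'(2) xy] by blast
  next
    case False
    with x obtain a w where a: "a \<in> Aset t0" and aw: "adj a w" and w: "w \<notin> UU"
      and wx: "(\<lambda>x y. adj x y \<and> x \<in> -UU \<and> y \<in> -UU)\<^sup>*\<^sup>* w x" and xU: "x \<notin> UU"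
      unfolding Bset_def by blast
    from a obtain s where s: "s \<in> T" "le t0 s" "a \<in> Vt s" unfolding Aset_def Vof_def up_def by auto
    show ?thesis
    proof (cases "a = y")
      case True then have "s = s'" using disj s s' by auto
      then show ?thesis using s Trefl unfolding comparable_def by blast
    next
      case False
      obtain q where q: "gpath adj q" "hd q = w" "last q = x" "set q \<subseteq> -UU"
        using path_extract[of adj "-UU" w x] wx w by auto
      have qne: "q \<noteq> []" using q gpath_ne by auto
      have aU: "a \<in> UU" using s unfolding UU_def Vof_def by auto
      have "gpath adj (q @ [y])" using gpath_snoc[OF q(1)] q xy True by auto
      moreover have "hd (q @ [y]) = w" using q qne by simp
      ultimately have p: "gpath adj (a # q @ [y])"
        using gpath_Cons[of adj "q @ [y]" a] aw aU q False by auto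
      have "U_path adj UU (a # q @ [y])"
        using Upath_build[OF p aU True qne] q by auto
      then have "comparable le s s'" using Upath[of "a # q @ [y]" s s'] s s' unfolding UU_def by simp
      then show ?thesis using s by blast
    qed
  qed
  then obtain s where s: "s \<in> T" "le t0 s" "comparable le s s'" by blast
  have "\<not> (le s' t0 \<and> s' \<noteq> t0)" using Zb s' yZ by auto
  then have "le t0 s'" using up_step[OF t0 s(1) s'(1) s(2) s(3)] by blast
  then show ?thesis unfolding Aset_def Vof_def up_def using s' by auto
qed

lemma closure_walk:
  assumes t0: "t0 \<in> T" and Zb: "\<forall>u\<in>T. le u t0 \<and> u \<noteq> t0 \<longrightarrow> Vt u \<subseteq> Z"
    and w: "(\<lambda>a b. adj a b \<and> b \<notin> Z)\<^sup>*\<^sup>* x y" and x: "x \<in> Aset t0 \<union> Bset t0"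
  shows "y \<in> Aset t0 \<union> Bset t0"
  using w x
  by (induction rule: rtranclp_induct) (use closure_step[OF t0 Zb] in blast)+

lemma B_UU: "v \<in> Bset t0 \<Longrightarrow> v \<notin> UU" unfolding Bset_def by blast

end

lemma conn_union:
  assumes "connected_in adj A" "connected_in adj B" "A \<inter> B \<noteq> {}"
  shows "connected_in adj (A \<union> B)"
proof -
  obtain c where c: "c \<in> A" "c \<in> B" using assms(3) by blast
  let ?R = "\<lambda>a b. adj a b \<and> a \<in> A \<union> B \<and> b \<in> A \<union> B"
  have rA: "?R\<^sup>*\<^sup>* x y" if "x \<in> A" "y \<in> A" for x y
  proof -
    have "(\<lambda>a b. adj a b \<and> a \<in> A \<and> b \<in> A)\<^sup>*\<^sup>* x y" using assms(1) that unfolding connected_graph_def by blast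
    then show ?thesis by (rule rt_mono) auto
  qed
  have rB: "?R\<^sup>*\<^sup>* x y" if "x \<in> B" "y \<in> B" for x y
  proof -
    have "(\<lambda>a b. adj a b \<and> a \<in> B \<and> b \<in> B)\<^sup>*\<^sup>* x y" using assms(2) that unfolding connected_graph_def by blast
    then show ?thesis by (rule rt_mono) auto
  qed
  have "?R\<^sup>*\<^sup>* x y" if "x \<in> A \<union> B" "y \<in> A \<union> B" for x y
  proof -
    have "?R\<^sup>*\<^sup>* x c" using that c rA rB by blast
    moreover have "?R\<^sup>*\<^sup>* c y" using that c rA rB by blast
    ultimately show ?thesis by (rule rtranclp_trans)
  qed
  then show ?thesis unfolding connected_graph_def using c by auto
qed

context nspt
begin

lemma up_conn: assumes t: "t \<in> T" shows "connected_in adj (Vof Vt (up T le t))"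
proof -
  define K where "K = Vof Vt (up T le t)"
  define R where "R = (\<lambda>a b. adj a b \<and> a \<in> K \<and> b \<in> K)"
  obtain v0 where v0: "v0 \<in> Vt t" using Vne[OF t] by blast
  have Ksub: "Vt s \<subseteq> K" if "s \<in> T" "le t s" for s
    using that unfolding K_def Vof_def up_def by auto
  have claim: "\<forall>x. s \<in> T \<longrightarrow> le t s \<longrightarrow> x \<in> Vt s \<longrightarrow> R\<^sup>*\<^sup>* v0 x" for s
  proof (induction s rule: wf_induct[OF Twf])
    case (1 s)
    show ?case
    proof (intro allI impI)
      fix x assume s: "s \<in> T" "le t s" and x: "x \<in> Vt s"
      have connR: "R\<^sup>*\<^sup>* a b" if "a \<in> Vt s" "b \<in> Vt s" for a b
      proof -
        have "(\<lambda>a b. adj a b \<and> a \<in> Vt s \<and> b \<in> Vt s)\<^sup>*\<^sup>* a b"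
          using Vconn[OF s(1)] that unfolding connected_graph_def by blast
        then show ?thesis by (rule rt_mono) (use Ksub[OF s] in \<open>auto simp: R_def\<close>)
      qed
      show "R\<^sup>*\<^sup>* v0 x"
      proof (cases "s = t")
        case True then show ?thesis using connR v0 x by blast
      next
        case False
        then have "t \<in> sdown T le s" unfolding sdown_def down_def using s t by auto
        then obtain u where u: "u \<in> sdown T le s" "contracted_adj adj T Vt u s" "le t u"
          using TG s unfolding T_graph_def by blast
        then obtain x' y' where xy: "x' \<in> Vt u" "y' \<in> Vt s" "adj x' y'"
          unfolding contracted_adj_def by auto
        have uT: "u \<in> T" "le u s" "u \<noteq> s" using u unfolding sdown_def down_def by auto
        then have "R\<^sup>*\<^sup>* v0 x'" using 1 s u xy by auto
        moreover have "R x' y'" using xy Ksub[OF uT(1) u(3)] Ksub[OF s] unfolding R_def by auto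
        moreover have "R\<^sup>*\<^sup>* y' x" using connR xy x by blast
        ultimately show ?thesis by (meson rtranclp.rtrancl_into_rtrancl rtranclp_trans)
      qed
    qed
  qed
  have all: "R\<^sup>*\<^sup>* v0 x" if "x \<in> K" for x
    using that claim unfolding K_def Vof_def up_def by auto
  have Rsym: "R a b \<Longrightarrow> R b a" for a b unfolding R_def using adjsym by blast
  have "R\<^sup>*\<^sup>* x y" if "x \<in> K" "y \<in> K" for x y
    using rt_sym[OF all[OF that(1)] Rsym] all[OF that(2)] by (rule rtranclp_trans)
  moreover have "K \<noteq> {}" using v0 Ksub[OF t Trefl[OF t]] by auto
  ultimately show ?thesis unfolding connected_graph_def K_def[symmetric] R_def by blast
qed

lemma sep_walk:
  assumes t: "t \<in> T" and t': "t' \<in> T" and inc: "\<not> comparable le t t'"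
    and x: "x \<in> Vt t" and y: "y \<in> Vt t'"
    and w: "(\<lambda>a b. adj a b \<and> b \<notin> Vof Vt (down T le t \<inter> down T le t'))\<^sup>*\<^sup>* x y"
  shows False
proof -
  let ?D = "down T le t \<inter> down T le t'"
  have tin: "t \<in> down T le t - ?D" using t Trefl inc unfolding down_def comparable_def by auto
  obtain t0 where t0: "t0 \<in> down T le t - ?D" "\<forall>u \<in> down T le t - ?D. le u t0 \<longrightarrow> u = t0"
    using Tmin[of "down T le t - ?D" t] tin unfolding down_def by blast
  have t0T: "t0 \<in> T" "le t0 t" using t0 unfolding down_def by auto
  have Zb: "\<forall>u\<in>T. le u t0 \<and> u \<noteq> t0 \<longrightarrow> Vt u \<subseteq> Vof Vt ?D"
  proof (intro ballI impI)
    fix u assume u: "u \<in> T" "le u t0 \<and> u \<noteq> t0"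
    then have "le u t" using Ttrans t0T t by blast
    then have "u \<in> ?D" using t0 u unfolding down_def by blast
    then show "Vt u \<subseteq> Vof Vt ?D" unfolding Vof_def by auto
  qed
  have "x \<in> Aset t0" using x t t0T unfolding Aset_def Vof_def up_def by auto
  then have "y \<in> Aset t0 \<union> Bset t0" using closure_walk[OF t0T(1) Zb w] by blast
  moreover have "y \<in> UU" using y t' unfolding UU_def Vof_def by auto
  ultimately have "y \<in> Aset t0" using B_UU by blast
  then obtain s where s: "s \<in> T" "le t0 s" "y \<in> Vt s" unfolding Aset_def Vof_def up_def by auto
  then have "s = t'" using disj y t' by blast
  then have "t0 \<in> ?D" using s t0 t0T unfolding down_def by auto
  then show False using t0 by blast
qed

lemma part1: "\<forall>t\<in>T. \<forall>t'\<in>T. \<not> comparable le t t' \<longrightarrow>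
        separates adj (Vof Vt (down T le t \<inter> down T le t')) (Vt t) (Vt t')"
proof (intro ballI impI)
  fix t t' assume t: "t \<in> T" "t' \<in> T" "\<not> comparable le t t'"
  show "separates adj (Vof Vt (down T le t \<inter> down T le t')) (Vt t) (Vt t')"
    unfolding separates_def
  proof (intro allI impI notI)
    fix p assume p: "gpath adj p \<and> hd p \<in> Vt t \<and> last p \<in> Vt t'"
      and e: "set p \<inter> Vof Vt (down T le t \<inter> down T le t') = {}"
    have "(\<lambda>a b. adj a b \<and> b \<notin> Vof Vt (down T le t \<inter> down T le t'))\<^sup>*\<^sup>* (hd p) (last p)"
    proof -
      have "(\<lambda>a b. adj a b \<and> b \<in> set p)\<^sup>*\<^sup>* (hd p) (last p)" using gpath_walk[of adj p] p by blast
      then show ?thesis by (rule rt_mono) (use e in blast)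
    qed
    then show False using sep_walk t p by blast
  qed
qed

lemma part2: "\<forall>W F. subgraph W F V adj \<and> connected_graph W F \<and> W \<inter> Vof Vt T \<noteq> {} \<longrightarrow>
        (\<exists>!t. t \<in> T \<and> Vt t \<inter> W \<noteq> {} \<and>
              (\<forall>s\<in>T. Vt s \<inter> W \<noteq> {} \<and> le s t \<longrightarrow> s = t))"
proof (intro allI impI)
  fix W F assume H: "subgraph W F V adj \<and> connected_graph W F \<and> W \<inter> Vof Vt T \<noteq> {}"
  let ?S = "{t \<in> T. Vt t \<inter> W \<noteq> {}}"
  obtain q where "q \<in> ?S" using H unfolding Vof_def by blast
  then obtain m where m: "m \<in> ?S" "\<forall>u\<in>?S. le u m \<longrightarrow> u = m" using Tmin[of ?S q] by blast
  have uniq: "t = t'" if t: "t \<in> T" "Vt t \<inter> W \<noteq> {}" "\<forall>s\<in>T. Vt s \<inter> W \<noteq> {} \<and> le s t \<longrightarrow> s = t"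
    and t': "t' \<in> T" "Vt t' \<inter> W \<noteq> {}" "\<forall>s\<in>T. Vt s \<inter> W \<noteq> {} \<and> le s t' \<longrightarrow> s = t'" for t t'
  proof (rule ccontr)
    assume ne: "t \<noteq> t'"
    have inc: "\<not> comparable le t t'" using ne t t' unfolding comparable_def by blast
    obtain x y where xy: "x \<in> Vt t \<inter> W" "y \<in> Vt t' \<inter> W" using t t' by blast
    let ?Z = "Vof Vt (down T le t \<inter> down T le t')"
    have WZ: "b \<notin> ?Z" if "b \<in> W" for b
    proof
      assume "b \<in> ?Z"
      then obtain s where s: "s \<in> T" "le s t" "le s t'" "b \<in> Vt s" unfolding Vof_def down_def by auto
      then have "s = t" using t that by blast
      then show False using s inc unfolding comparable_def by blast
    qed
    have "(\<lambda>a b. F a b \<and> a \<in> W \<and> b \<in> W)\<^sup>*\<^sup>* x y" using H xy unfolding connected_graph_def by blast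
    then have "(\<lambda>a b. adj a b \<and> b \<notin> ?Z)\<^sup>*\<^sup>* x y"
      by (rule rt_mono) (use H WZ in \<open>auto simp: subgraph_def\<close>)
    then show False using sep_walk[OF t(1) t'(1) inc] xy by blast
  qed
  show "\<exists>!t. t \<in> T \<and> Vt t \<inter> W \<noteq> {} \<and> (\<forall>s\<in>T. Vt s \<inter> W \<noteq> {} \<and> le s t \<longrightarrow> s = t)"
    using m uniq by (intro ex1I[of _ m]) blast+
qed

lemma min_below:
  assumes "s \<in> T - T'" shows "\<exists>t\<in>T - T'. le t s \<and> (\<forall>u\<in>T - T'. le u t \<longrightarrow> u = t)"
proof -
  obtain m where m: "m \<in> {u \<in> T - T'. le u s}" "\<forall>u\<in>{u \<in> T - T'. le u s}. le u m \<longrightarrow> u = m"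
    using Tmin[of "{u \<in> T - T'. le u s}" s] assms Trefl by blast
  have "\<forall>u\<in>T - T'. le u m \<longrightarrow> u = m"
    using m Ttrans assms by blast
  then show ?thesis using m by blast
qed

lemma Zb_T':
  assumes "t \<in> T - T'" "\<forall>s\<in>T - T'. le s t \<longrightarrow> s = t"
  shows "\<forall>u\<in>T. le u t \<and> u \<noteq> t \<longrightarrow> Vt u \<subseteq> Vof Vt T'"
  using assms unfolding Vof_def by blast

lemma inK:
  assumes t: "t \<in> T - T'" and tmin: "\<forall>s\<in>T - T'. le s t \<longrightarrow> s = t"
    and D: "connected_in adj D" "D \<subseteq> Vof Vt T - Vof Vt T'" "D \<inter> Vof Vt (up T le t) \<noteq> {}"
  shows "D \<subseteq> Vof Vt (up T le t)"
proof
  fix y assume y: "y \<in> D"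
  obtain c where c: "c \<in> D" "c \<in> Vof Vt (up T le t)" using D by blast
  have "(\<lambda>a b. adj a b \<and> a \<in> D \<and> b \<in> D)\<^sup>*\<^sup>* c y" using D c y unfolding connected_graph_def by blast
  then have "(\<lambda>a b. adj a b \<and> b \<notin> Vof Vt T')\<^sup>*\<^sup>* c y" by (rule rt_mono) (use D in blast)
  then have "y \<in> Aset t \<union> Bset t"
    using closure_walk[OF _ Zb_T'[OF t tmin]] t c unfolding Aset_def by blast
  moreover have "y \<in> UU" using y D unfolding UU_def by blast
  ultimately show "y \<in> Vof Vt (up T le t)" using B_UU unfolding Aset_def by blast
qed

lemma K_sub:
  assumes T': "down_closed T le T'" and t: "t \<in> T - T'"
  shows "Vof Vt (up T le t) \<subseteq> Vof Vt T - Vof Vt T'"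
proof
  fix x assume "x \<in> Vof Vt (up T le t)"
  then obtain s where s: "s \<in> T" "le t s" "x \<in> Vt s" unfolding Vof_def up_def by auto
  have "s \<notin> T'" using T' s t unfolding down_closed_def down_def by blast
  moreover have "x \<notin> Vof Vt T'"
  proof
    assume "x \<in> Vof Vt T'"
    then obtain s' where "s' \<in> T'" "x \<in> Vt s'" unfolding Vof_def by auto
    then have "s' = s" using disj s T' unfolding down_closed_def by blast
    then show False using \<open>s' \<in> T'\<close> \<open>s \<notin> T'\<close> by blast
  qed
  ultimately show "x \<in> Vof Vt T - Vof Vt T'" using s unfolding Vof_def by auto
qed

lemma compK:
  assumes T': "down_closed T le T'" and t: "t \<in> T - T'" and tmin: "\<forall>s\<in>T - T'. le s t \<longrightarrow> s = t"
  shows "component_of adj (Vof Vt T - Vof Vt T') (Vof Vt (up T le t))"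
proof -
  have ne: "Vof Vt (up T le t) \<noteq> {}" using Vne t Trefl unfolding Vof_def up_def by blast
  show ?thesis unfolding component_of_def
    using K_sub[OF T' t] up_conn t inK[OF t tmin] ne by blast
qed

lemma part3: "\<forall>T'. down_closed T le T' \<longrightarrow>
        (\<forall>C. component_of adj (Vof Vt T - Vof Vt T') C \<longrightarrow>
           (\<exists>t\<in>T - T'. (\<forall>s\<in>T - T'. le s t \<longrightarrow> s = t) \<and> C = Vof Vt (up T le t)))"
proof (intro allI impI)
  fix T' C assume T': "down_closed T le T'" and C: "component_of adj (Vof Vt T - Vof Vt T') C"
  have Cc: "C \<subseteq> Vof Vt T - Vof Vt T'" "connected_in adj C" using C unfolding component_of_def by auto
  then obtain c where c: "c \<in> C" unfolding connected_graph_def by blast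
  then obtain s where s: "s \<in> T" "c \<in> Vt s" using Cc unfolding Vof_def by blast
  have "s \<notin> T'" using s c Cc unfolding Vof_def by blast
  then obtain t where t: "t \<in> T - T'" "le t s" "\<forall>u\<in>T - T'. le u t \<longrightarrow> u = t"
    using min_below[of s T'] s by blast
  have cK: "c \<in> Vof Vt (up T le t)" using s t unfolding Vof_def up_def by auto
  have "C \<subseteq> Vof Vt (up T le t)" using inK[OF t(1) t(3) Cc(2) Cc(1)] c cK by blast
  then have "Vof Vt (up T le t) = C"
    using C K_sub[OF T' t(1)] up_conn[of t] t unfolding component_of_def by blast
  then show "\<exists>t\<in>T - T'. (\<forall>s\<in>T - T'. le s t \<longrightarrow> s = t) \<and> C = Vof Vt (up T le t)"
    using t by blast
qed

lemma part4: "\<forall>T'. down_closed T le T' \<longrightarrow>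
        (\<forall>C. component_of adj (V - Vof Vt T') C \<and> C \<inter> Vof Vt T \<noteq> {} \<longrightarrow>
           component_of adj (Vof Vt T - Vof Vt T') (C \<inter> Vof Vt T))"
proof (intro allI impI)
  fix T' C assume T': "down_closed T le T'" and C: "component_of adj (V - Vof Vt T') C \<and> C \<inter> Vof Vt T \<noteq> {}"
  have Cc: "C \<subseteq> V - Vof Vt T'" "connected_in adj C" using C unfolding component_of_def by auto
  obtain c where c: "c \<in> C" "c \<in> Vof Vt T" using C by blast
  then obtain s where s: "s \<in> T" "c \<in> Vt s" unfolding Vof_def by blast
  have "s \<notin> T'" using s c Cc unfolding Vof_def by blast
  then obtain t where t: "t \<in> T - T'" "le t s" "\<forall>u\<in>T - T'. le u t \<longrightarrow> u = t"
    using min_below[of s T'] s by blast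
  let ?K = "Vof Vt (up T le t)"
  have cK: "c \<in> ?K" using s t unfolding Vof_def up_def by auto
  have KV: "?K \<subseteq> V" using VsubV unfolding Vof_def up_def by blast
  have "C \<union> ?K \<subseteq> V - Vof Vt T'" using Cc K_sub[OF T' t(1)] KV by blast
  moreover have "connected_in adj (C \<union> ?K)" using conn_union[OF Cc(2) up_conn] t cK c by blast
  ultimately have "C \<union> ?K = C" using C unfolding component_of_def by blast
  then have KC: "?K \<subseteq> C" by blast
  have CK: "C \<inter> Vof Vt T \<subseteq> ?K"
  proof
    fix y assume y: "y \<in> C \<inter> Vof Vt T"
    have "(\<lambda>a b. adj a b \<and> a \<in> C \<and> b \<in> C)\<^sup>*\<^sup>* c y" using Cc c y unfolding connected_graph_def by blast
    then have "(\<lambda>a b. adj a b \<and> b \<notin> Vof Vt T')\<^sup>*\<^sup>* c y" by (rule rt_mono) (use Cc in blast)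
    then have "y \<in> Aset t \<union> Bset t"
      using closure_walk[OF _ Zb_T'[OF t(1) t(3)]] t cK unfolding Aset_def by blast
    moreover have "y \<in> UU" using y unfolding UU_def by blast
    ultimately show "y \<in> ?K" using B_UU unfolding Aset_def by blast
  qed
  have "?K \<subseteq> Vof Vt T" unfolding Vof_def up_def by blast
  then have "C \<inter> Vof Vt T = ?K" using KC CK by blast
  then show "component_of adj (Vof Vt T - Vof Vt T') (C \<inter> Vof Vt T)" using compK[OF T' t(1) t(3)] by simp
qed

end

theorem lemma4p1:
  fixes V :: "'v set" and adj :: "'v \<Rightarrow> 'v \<Rightarrow> bool"
    and T :: "'t set" and le :: "'t \<Rightarrow> 't \<Rightarrow> bool" and Vt :: "'t \<Rightarrow> 'v set"
  assumes G: "graph V adj"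
    and Gconn: "connected_graph V adj"
    and NSPT: "normal_semi_partition_tree V adj T le Vt"
  shows
    "(\<forall>t\<in>T. \<forall>t'\<in>T. \<not> comparable le t t' \<longrightarrow>
        separates adj (Vof Vt (down T le t \<inter> down T le t')) (Vt t) (Vt t')) \<and>
    (\<forall>W F. subgraph W F V adj \<and> connected_graph W F \<and> W \<inter> Vof Vt T \<noteq> {} \<longrightarrow>
        (\<exists>!t. t \<in> T \<and> Vt t \<inter> W \<noteq> {} \<and>
              (\<forall>s\<in>T. Vt s \<inter> W \<noteq> {} \<and> le s t \<longrightarrow> s = t))) \<and>
    (\<forall>T'. down_closed T le T' \<longrightarrow>
        (\<forall>C. component_of adj (Vof Vt T - Vof Vt T') C \<longrightarrow>
           (\<exists>t\<in>T - T'. (\<forall>s\<in>T - T'. le s t \<longrightarrow> s = t) \<and> C = Vof Vt (up T le t)))) \<and>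
    (\<forall>T'. down_closed T le T' \<longrightarrow>
        (\<forall>C. component_of adj (V - Vof Vt T') C \<and> C \<inter> Vof Vt T \<noteq> {} \<longrightarrow>
           component_of adj (Vof Vt T - Vof Vt T') (C \<inter> Vof Vt T)))"
proof -
  interpret nspt V adj T le Vt using G NSPT by unfold_locales
  show ?thesis using part1 part2 part3 part4 by blast
qed

end
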